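(* Let $n$ be an odd squarefree positive integer. If $n\equiv 5$ or $7\pmod 8$, then $c_1(n)=0$. If $n\equiv 3\pmod 4$, then $c_2(n)=0$.
   Context: Define the formal power series $g(T)=T\prod_{k=1}^{\infty}(1-T^{8k})(1-T^{16k})\in\mathbb{Z}[[T]]$ and, for $j=1,2$, $\theta_j(T)=1+2\sum_{k=1}^{\infty}T^{2jk^2}$. For $j=1,2$ and an integer $n>0$, $c_j(n)$ denotes the coefficient of $T^n$ in the formal power series $g(T)\theta_j(T)$. *)

theory Defs
  imports "HOL-Computational_Algebra.Formal_Power_Series" "HOL-Computational_Algebra.Squarefree"
begin

definition g_partial :: "nat \<Rightarrow> int fps" where
  "g_partial N = fps_X * (\<Prod>k\<in>{1..N}. (1 - fps_X ^ (8*k)) * (1 - fps_X ^ (16*k)))"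

text \<open>The formal infinite product: its n-th coefficient is that of any partial product
  with N >= n (the factors with k > n do not affect coefficients of T^m, m <= n).\<close>
definition g :: "int fps" where
  "g = Abs_fps (\<lambda>n. fps_nth (g_partial n) n)"

definition theta :: "nat \<Rightarrow> int fps" where
  "theta j = Abs_fps (\<lambda>m. if m = 0 then 1
                           else if (\<exists>k::nat. k \<ge> 1 \<and> m = 2*j*k^2) then 2 else 0)"

definition c :: "nat \<Rightarrow> nat \<Rightarrow> int" where
  "c j n = fps_nth (g * theta j) n"

end

theory Submission
  imports Defs
begin

definition sup8 :: "int fps \<Rightarrow> bool" where
  "sup8 f \<longleftrightarrow> (\<forall>m. m mod 8 \<noteq> 0 \<longrightarrow> fps_nth (f) m = 0)"

lemma sup8_mult:
  assumes "sup8 f" "sup8 h" shows "sup8 (f * h)"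
  unfolding sup8_def
proof (intro allI impI)
  fix m :: nat assume m: "m mod 8 \<noteq> 0"
  have "fps_nth ((f * h)) m = (\<Sum>i=0..m. fps_nth (f) i * fps_nth (h) (m-i))" by (rule fps_mult_nth)
  also have "\<dots> = 0"
  proof (rule sum.neutral, intro ballI)
    fix i assume i: "i \<in> {0..m}"
    show "fps_nth (f) i * fps_nth (h) (m-i) = 0"
    proof (cases "i mod 8 = 0")
      case True
      have "i \<le> m" using i by simp
      hence "(m - i) mod 8 \<noteq> 0" using m True by presburger
      thus ?thesis using assms(2) unfolding sup8_def by simp
    next
      case False thus ?thesis using assms(1) unfolding sup8_def by simp
    qed
  qed
  finally show "fps_nth ((f * h)) m = 0" .
qed

lemma sup8_one: "sup8 1" unfolding sup8_def by simp

lemma sup8_Xpow: "sup8 (fps_X ^ (8*k))" unfolding sup8_def by (auto simp: fps_X_power_iff)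

lemma sup8_diff: "sup8 f \<Longrightarrow> sup8 h \<Longrightarrow> sup8 (f - h)" unfolding sup8_def by simp

lemma sup8_prod: "sup8 (\<Prod>k\<in>{1..N}. (1 - fps_X ^ (8*k)) * (1 - fps_X ^ (16*k)) :: int fps)"
proof (induction N)
  case 0 thus ?case by (simp add: sup8_one)
next
  case (Suc N)
  have e: "16 * k = 8 * (2*k)" for k :: nat by simp
  have "sup8 ((1 - fps_X ^ (8*Suc N)) * (1 - fps_X ^ (16*Suc N)) :: int fps)"
    unfolding e by (intro sup8_mult sup8_diff sup8_one sup8_Xpow)
  thus ?case using Suc by (simp add: prod.cl_ivl_Suc sup8_mult)
qed

lemma g_nth: "fps_nth (g) m \<noteq> 0 \<Longrightarrow> m mod 8 = 1"
proof -
  assume a: "fps_nth (g) m \<noteq> 0"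
  hence "fps_nth ((g_partial m)) m \<noteq> 0" by (simp add: g_def)
  hence "m \<noteq> 0 \<and> fps_nth (\<Prod>k\<in>{1..m}. (1 - fps_X ^ (8*k)) * (1 - fps_X ^ (16*k)) :: int fps) (m-1) \<noteq> 0"
    by (simp add: g_partial_def fps_X_mult_nth split: if_splits)
  hence "m \<noteq> 0 \<and> (m - 1) mod 8 = 0" using sup8_prod[of m] unfolding sup8_def by blast
  thus ?thesis by presburger
qed

lemma sq_mod4: "(k::nat)^2 mod 4 = 0 \<or> k^2 mod 4 = 1"
proof (cases "even k")
  case True then obtain a where "k = 2*a" by blast
  thus ?thesis by (simp add: power2_eq_square)
next
  case False then obtain a where "k = 2*a+1" using oddE by blast
  hence "k^2 = 4*(a*a+a) + 1" by (simp add: power2_eq_square algebra_simps)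
  thus ?thesis by simp
qed

lemma theta_nth: "fps_nth (theta j) m \<noteq> 0 \<Longrightarrow> \<exists>k::nat. m = 2*j*k^2"
  by (auto simp: theta_def split: if_splits intro: exI[of _ 0])

lemma c_zero:
  assumes "\<And>i k. i mod 8 = 1 \<Longrightarrow> i \<le> n \<Longrightarrow> n - i = 2*j*k^2 \<Longrightarrow> False"
  shows "c j n = 0"
proof -
  have "c j n = (\<Sum>i=0..n. fps_nth (g) i * fps_nth (theta j) (n-i))" unfolding c_def by (rule fps_mult_nth)
  also have "\<dots> = 0"
  proof (rule sum.neutral, intro ballI)
    fix i assume i: "i \<in> {0..n}"
    show "fps_nth (g) i * fps_nth (theta j) (n-i) = 0"
    proof (rule ccontr)
      assume "fps_nth (g) i * fps_nth (theta j) (n-i) \<noteq> 0"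
      hence "fps_nth (g) i \<noteq> 0" "fps_nth (theta j) (n-i) \<noteq> 0" by auto
      with g_nth theta_nth obtain k where "i mod 8 = 1" "n - i = 2*j*k^2" by blast
      thus False using assms i by auto
    qed
  qed
  finally show ?thesis .
qed

theorem mainTheorem10:
  fixes n :: nat
  assumes "n > 0" and "odd n" and "squarefree n"
  shows "(n mod 8 = 5 \<or> n mod 8 = 7 \<longrightarrow> c 1 n = 0) \<and> (n mod 4 = 3 \<longrightarrow> c 2 n = 0)"
proof (intro conjI impI)
  assume h: "n mod 8 = 5 \<or> n mod 8 = 7"
  show "c 1 n = 0"
  proof (rule c_zero)
    fix i k assume a: "i mod 8 = 1" "i \<le> n" "n - i = 2*1*k^2"
    define s where "s = k^2"
    have "n = i + 2 * s" using a unfolding s_def by simp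
    moreover have "s mod 4 = 0 \<or> s mod 4 = 1" using sq_mod4[of k] unfolding s_def .
    ultimately show False using a(1) h by presburger
  qed
next
  assume h: "n mod 4 = 3"
  show "c 2 n = 0"
  proof (rule c_zero)
    fix i k assume a: "i mod 8 = 1" "i \<le> n" "n - i = 2*2*k^2"
    define s where "s = k^2"
    have "n = i + 4 * s" using a unfolding s_def by simp
    thus False using a(1) h by presburger
  qed
qed

end
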